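(* For integers $n\ge1$ and $q\ge2$, $$\mathbb E_{{\boldsymbol y}\in\Sigma_q^{n-1}}\big[\mathsf{H}^{\mathsf{In}}_{1\text{-}\mathsf{Del}}({\boldsymbol y})\big]=\log_2(nq)-\frac{\sum_{r=1}^{n-1}N_{n-1,r,q}\,(r+1)\log_2(r+1)}{nq^n},$$ $$\mathbb E_{{\boldsymbol y}\in\Sigma_q^{n+1}}\big[\mathsf{H}^{\mathsf{In}}_{1\text{-}\mathsf{Ins}}({\boldsymbol y})\big]=\log_2(n+1)-\frac{\sum_{r=1}^{n+1}N_{n+1,r,q}\,r\log_2 r}{(n+1)q^{n+1}},$$ where the expectations are over ${\boldsymbol y}$ uniformly distributed on the indicated sets.
   Context: $\Sigma_q=\{0,\dots,q-1\}$. For sequences ${\boldsymbol u}$ of length $\ell$ and ${\boldsymbol v}$ of length $N\ge\ell$, $\omega_{{\boldsymbol u}}({\boldsymbol v})$ is the number of index tuples $1\le i_1<\dots<i_\ell\le N$ with $v_{i_j}=u_j$. The $1$-deletion channel with input length $n$ maps ${\boldsymbol x}\in\Sigma_q^n$ to ${\boldsymbol y}\in\Sigma_q^{n-1}$ with probability $\omega_{{\boldsymbol y}}({\boldsymbol x})/n$; the $1$-insertion channel with input length $n$ maps ${\boldsymbol x}\in\Sigma_q^n$ to ${\boldsymbol y}\in\Sigma_q^{n+1}$ with probability $\omega_{{\boldsymbol x}}({\boldsymbol y})/((n+1)q)$. Under uniform transmission ($X$ uniform on $\Sigma_q^n$), the input entropy of an output ${\boldsymbol y}$ is $H(X\mid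 Y={\boldsymbol y})$ in bits, with posterior $P({\boldsymbol x}\mid {\boldsymbol y})=\Pr\{{\boldsymbol y}\mid{\boldsymbol x}\}/\sum_{{\boldsymbol x}'}\Pr\{{\boldsymbol y}\mid{\boldsymbol x}'\}$; these are denoted $\mathsf{H}^{\mathsf{In}}_{1\text{-}\mathsf{Del}}({\boldsymbol y})$ and $\mathsf{H}^{\mathsf{In}}_{1\text{-}\mathsf{Ins}}({\boldsymbol y})$ respectively. A run is a maximal block of identical consecutive symbols, and $N_{\ell,r,q}$ denotes the total number of runs of length exactly $r$ counted over all sequences in $\Sigma_q^{\ell}$. *)

theory Defs
  imports Complex_Main
begin

definition words :: "nat \<Rightarrow> nat \<Rightarrow> nat list set" where
  "words q n = {xs. length xs = n \<and> set xs \<subseteq> {..<q}}"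

text \<open>omega u v: number of index tuples i_1<...<i_l (0-based: sets of l indices of v)
  with v at those indices equal to u.\<close>
definition omega :: "nat list \<Rightarrow> nat list \<Rightarrow> nat" where
  "omega u v = card {I. I \<subseteq> {..<length v} \<and> card I = length u \<and> nths v I = u}"

definition del_prob :: "nat \<Rightarrow> nat list \<Rightarrow> nat list \<Rightarrow> real" where
  "del_prob n x y = real (omega y x) / real n"

definition ins_prob :: "nat \<Rightarrow> nat \<Rightarrow> nat list \<Rightarrow> nat list \<Rightarrow> real" where
  "ins_prob n q x y = real (omega x y) / (real (n + 1) * real q)"

text \<open>Input entropy H(X | Y = y) in bits, X uniform on words q n, channel ch x y = Pr{y|x}.\<close>
definition input_entropy :: "(nat list \<Rightarrow> nat list \<Rightarrow> real) \<Rightarrow> nat \<Rightarrow> nat \<Rightarrow> nat list \<Rightarrow> real" where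
  "input_entropy ch q n y =
     (let post = (\<lambda>x. ch x y / (\<Sum>x'\<in>words q n. ch x' y))
      in - (\<Sum>x\<in>words q n. if post x = 0 then 0 else post x * log 2 (post x)))"

definition H_in_del :: "nat \<Rightarrow> nat \<Rightarrow> nat list \<Rightarrow> real" where
  "H_in_del q n y = input_entropy (del_prob n) q n y"

definition H_in_ins :: "nat \<Rightarrow> nat \<Rightarrow> nat list \<Rightarrow> real" where
  "H_in_ins q n y = input_entropy (ins_prob n q) q n y"

text \<open>A run: maximal block [i,j) (0-based, half-open) of identical consecutive symbols.\<close>
definition is_run :: "nat list \<Rightarrow> nat \<Rightarrow> nat \<Rightarrow> bool" where
  "is_run xs i j \<longleftrightarrow> i < j \<and> j \<le> length xs \<and> (\<forall>k\<in>{i..<j}. xs ! k = xs ! i)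
     \<and> (0 < i \<longrightarrow> xs ! (i - 1) \<noteq> xs ! i) \<and> (j < length xs \<longrightarrow> xs ! j \<noteq> xs ! i)"

definition num_runs :: "nat \<Rightarrow> nat list \<Rightarrow> nat" where
  "num_runs r xs = card {(i, j). is_run xs i j \<and> j - i = r}"

definition N_runs :: "nat \<Rightarrow> nat \<Rightarrow> nat \<Rightarrow> nat" where
  "N_runs l r q = (\<Sum>xs\<in>words q l. num_runs r xs)"

end

theory Submission
  imports Defs
begin

definition delp :: "nat \<Rightarrow> nat list \<Rightarrow> nat list" where
  "delp i xs = take i xs @ drop (Suc i) xs"
definition insp :: "nat \<Rightarrow> nat \<Rightarrow> nat list \<Rightarrow> nat list" where
  "insp i a xs = take i xs @ a # drop i xs"

lemma length_delp[simp]: "i < length xs \<Longrightarrow> length (delp i xs) = length xs - 1"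
  by (simp add: delp_def)
lemma length_insp[simp]: "i \<le> length xs \<Longrightarrow> length (insp i a xs) = Suc (length xs)"
  by (simp add: insp_def)

lemma nth_delp: "i < length xs \<Longrightarrow> k < length xs - 1 \<Longrightarrow>
  delp i xs ! k = (if k < i then xs ! k else xs ! Suc k)"
  by (auto simp: delp_def nth_append min_def)

lemma nth_insp: "i \<le> length xs \<Longrightarrow> k < Suc (length xs) \<Longrightarrow>
  insp i a xs ! k = (if k < i then xs ! k else if k = i then a else xs ! (k - 1))"
  by (auto simp: insp_def nth_append min_def nth_Cons')

lemma delp_insp[simp]: "i \<le> length xs \<Longrightarrow> delp i (insp i a xs) = xs"
  by (simp add: delp_def insp_def)

lemma insp_delp: "i < length xs \<Longrightarrow> insp i (xs ! i) (delp i xs) = xs"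
  by (simp add: delp_def insp_def min_def id_take_nth_drop[symmetric])

lemma set_delp: "set (delp i xs) \<subseteq> set xs"
  unfolding delp_def by (auto dest: in_set_takeD in_set_dropD)

lemma set_insp: "set (insp i a xs) \<subseteq> insert a (set xs)"
  unfolding insp_def using set_drop_subset set_take_subset by fastforce

lemma nths_delp: "nths xs (- {i}) = delp i xs"
proof (induction xs arbitrary: i)
  case Nil then show ?case by (simp add: delp_def)
next
  case (Cons x xs)
  show ?case
  proof (cases i)
    case 0
    then show ?thesis by (simp add: nths_Cons delp_def nths_all)
  next
    case (Suc j)
    have "{k. Suc k \<in> - {i}} = - {j}" using Suc by auto
    then show ?thesis using Cons Suc by (simp add: nths_Cons delp_def)
  qed
qed

lemma nths_restrict: "nths xs (A \<inter> {..<length xs}) = nths xs A"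
  unfolding nths_def by (rule arg_cong[where f="map fst"], rule filter_cong) (auto simp: set_zip)

lemma words_finite[simp]: "finite (words q n)"
proof -
  have "words q n = {xs. set xs \<subseteq> {..<q} \<and> length xs = n}" by (auto simp: words_def)
  then show ?thesis using finite_lists_length_eq[of "{..<q}" n] by simp
qed

lemma card_words: "card (words q n) = q ^ n"
proof -
  have "words q n = {xs. set xs \<subseteq> {..<q} \<and> length xs = n}" by (auto simp: words_def)
  then show ?thesis using card_lists_length_eq[of "{..<q}" n] by simp
qed

lemma omega_del:
  assumes "length v = Suc m" "length u = m"
  shows "omega u v = card {i. i < Suc m \<and> delp i v = u}"
proof -
  let ?S = "{i. i < Suc m \<and> delp i v = u}"
  have eq: "{I. I \<subseteq> {..<length v} \<and> card I = length u \<and> nths v I = u} = (\<lambda>i. {..<Suc m} - {i}) ` ?S"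
  proof
    show "(\<lambda>i. {..<Suc m} - {i}) ` ?S \<subseteq> {I. I \<subseteq> {..<length v} \<and> card I = length u \<and> nths v I = u}"
    proof
      fix I assume "I \<in> (\<lambda>i. {..<Suc m} - {i}) ` ?S"
      then obtain i where i: "i < Suc m" "delp i v = u" "I = {..<Suc m} - {i}" by auto
      have "I = (- {i}) \<inter> {..<length v}" using i assms by auto
      then have "nths v I = u" using nths_restrict[of v "- {i}"] nths_delp i by simp
      moreover have "card I = length u" using i assms by simp
      ultimately show "I \<in> {I. I \<subseteq> {..<length v} \<and> card I = length u \<and> nths v I = u}"
        using i assms by auto
    qed
  next
    show "{I. I \<subseteq> {..<length v} \<and> card I = length u \<and> nths v I = u} \<subseteq> (\<lambda>i. {..<Suc m} - {i}) ` ?S"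
    proof
      fix I assume "I \<in> {I. I \<subseteq> {..<length v} \<and> card I = length u \<and> nths v I = u}"
      then have I: "I \<subseteq> {..<Suc m}" "card I = m" "nths v I = u" using assms by auto
      have "card ({..<Suc m} - I) = 1" using I by (simp add: card_Diff_subset finite_subset)
      then obtain i where i: "{..<Suc m} - I = {i}" using card_1_singletonE by blast
      then have im: "i < Suc m" by auto
      have Ieq: "I = {..<Suc m} - {i}" using i I(1) by auto
      have "I = (- {i}) \<inter> {..<length v}" using Ieq assms by auto
      then have "delp i v = u" using nths_restrict[of v "- {i}"] nths_delp I(3) by simp
      then show "I \<in> (\<lambda>i. {..<Suc m} - {i}) ` ?S" using im Ieq by auto
    qed
  qed
  have inj: "inj_on (\<lambda>i. {..<Suc m} - {i}) ?S"
    by (rule inj_onI) auto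
  show ?thesis unfolding omega_def eq using card_image[OF inj] by simp
qed

lemma delp_eq_iff:
  assumes "i \<le> j" "j < length xs"
  shows "delp i xs = delp j xs \<longleftrightarrow> (\<forall>k. i \<le> k \<and> k \<le> j \<longrightarrow> xs ! k = xs ! i)"
proof
  assume eq: "delp i xs = delp j xs"
  have step: "xs ! Suc k = xs ! k" if "i \<le> k" "k < j" for k
  proof -
    have "delp i xs ! k = delp j xs ! k" using eq by simp
    moreover have "delp i xs ! k = xs ! Suc k" using that assms by (simp add: nth_delp)
    moreover have "delp j xs ! k = xs ! k" using that assms by (simp add: nth_delp)
    ultimately show ?thesis by simp
  qed
  show "\<forall>k. i \<le> k \<and> k \<le> j \<longrightarrow> xs ! k = xs ! i"
  proof (intro allI impI)
    fix k assume k: "i \<le> k \<and> k \<le> j"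
    then have "i \<le> k" by simp
    then show "xs ! k = xs ! i" using k
    proof (induction k rule: dec_induct)
      case base then show ?case by simp
    next
      case (step m)
      have "xs ! Suc m = xs ! m" using \<open>\<And>k. i \<le> k \<Longrightarrow> k < j \<Longrightarrow> xs ! Suc k = xs ! k\<close>[of m] step by linarith
      then show ?case using step by simp
    qed
  qed
next
  assume c: "\<forall>k. i \<le> k \<and> k \<le> j \<longrightarrow> xs ! k = xs ! i"
  show "delp i xs = delp j xs"
  proof (rule nth_equalityI)
    show "length (delp i xs) = length (delp j xs)" using assms by simp
    fix k assume "k < length (delp i xs)"
    then have k: "k < length xs - 1" using assms by simp
    show "delp i xs ! k = delp j xs ! k"
    proof -
      consider "k < i" | "i \<le> k" "k < j" | "j \<le> k" by linarith
      then show ?thesis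
      proof cases
        case 1 then show ?thesis using assms k by (simp add: nth_delp)
      next
        case 2
        have "xs ! Suc k = xs ! i" using c[rule_format, of "Suc k"] 2 by linarith
        moreover have "xs ! k = xs ! i" using c[rule_format, of k] 2 by linarith
        ultimately show ?thesis using assms k 2 by (simp add: nth_delp)
      next
        case 3 then show ?thesis using assms k by (simp add: nth_delp)
      qed
    qed
  qed
qed

lemma is_runD:
  assumes "is_run xs i j"
  shows "i < j" "j \<le> length xs" "\<And>k. i \<le> k \<Longrightarrow> k < j \<Longrightarrow> xs ! k = xs ! i"
    "0 < i \<Longrightarrow> xs ! (i - 1) \<noteq> xs ! i" "j < length xs \<Longrightarrow> xs ! j \<noteq> xs ! i"
proof -
  have h: "i < j \<and> j \<le> length xs \<and> (\<forall>k\<in>{i..<j}. xs ! k = xs ! i)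
     \<and> (0 < i \<longrightarrow> xs ! (i - 1) \<noteq> xs ! i) \<and> (j < length xs \<longrightarrow> xs ! j \<noteq> xs ! i)"
    using assms unfolding is_run_def .
  show "i < j" using h by (rule conjunct1)
  show "j \<le> length xs" using h by (elim conjE)
  show "xs ! k = xs ! i" if "i \<le> k" "k < j" for k
  proof -
    have "\<forall>k\<in>{i..<j}. xs ! k = xs ! i" using h by (elim conjE)
    moreover have "k \<in> {i..<j}" using that by simp
    ultimately show ?thesis by (rule bspec)
  qed
  show "0 < i \<Longrightarrow> xs ! (i - 1) \<noteq> xs ! i" using h by (elim conjE) (rule mp)
  show "j < length xs \<Longrightarrow> xs ! j \<noteq> xs ! i" using h by (elim conjE) (rule mp)
qed

lemma is_runI:
  assumes "i < j" "j \<le> length xs" "\<And>k. i \<le> k \<Longrightarrow> k < j \<Longrightarrow> xs ! k = xs ! i"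
    "0 < i \<Longrightarrow> xs ! (i - 1) \<noteq> xs ! i" "j < length xs \<Longrightarrow> xs ! j \<noteq> xs ! i"
  shows "is_run xs i j"
  unfolding is_run_def
proof (intro conjI ballI impI)
  fix k assume "k \<in> {i..<j}" then show "xs ! k = xs ! i" by (intro assms(3)) auto
next
  show "i < j" by (rule assms(1))
next
  show "j \<le> length xs" by (rule assms(2))
next
  show "0 < i \<Longrightarrow> xs ! (i - 1) \<noteq> xs ! i" by (rule assms(4))
next
  show "j < length xs \<Longrightarrow> xs ! j \<noteq> xs ! i" by (rule assms(5))
qed

definition cset :: "nat list \<Rightarrow> nat \<Rightarrow> nat set" where
  "cset xs i = {j. j < length xs \<and> delp j xs = delp i xs}"

definition runs :: "nat list \<Rightarrow> (nat \<times> nat) set" where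
  "runs xs = {(i, j). is_run xs i j}"

lemma finite_runs[simp]: "finite (runs xs)"
proof -
  have "runs xs \<subseteq> {..length xs} \<times> {..length xs}" using is_runD(1,2) by (fastforce simp: runs_def)
  then show ?thesis by (rule finite_subset) auto
qed

lemma delp_eq_sym_iff:
  assumes "i < length xs" "j < length xs"
  shows "delp i xs = delp j xs \<longleftrightarrow> (\<forall>k. min i j \<le> k \<and> k \<le> max i j \<longrightarrow> xs ! k = xs ! min i j)"
proof (cases "i \<le> j")
  case True
  then have m: "min i j = i" "max i j = j" by auto
  show ?thesis unfolding m by (rule delp_eq_iff[OF True assms(2)])
next
  case False
  then have m: "min i j = j" "max i j = i" "j \<le> i" by auto
  have "delp i xs = delp j xs \<longleftrightarrow> delp j xs = delp i xs" by auto
  also have "\<dots> \<longleftrightarrow> (\<forall>k. j \<le> k \<and> k \<le> i \<longrightarrow> xs ! k = xs ! j)" by (rule delp_eq_iff[OF m(3) assms(1)])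
  finally show ?thesis unfolding m .
qed

lemma cset_run:
  assumes r: "is_run xs s e" and i: "s \<le> i" "i < e"
  shows "cset xs i = {s..<e}"
proof -
  define v where "v = xs ! s"
  from r have se: "s < e" "e \<le> length xs" and const: "\<And>k. s \<le> k \<Longrightarrow> k < e \<Longrightarrow> xs ! k = v"
    and left: "0 < s \<Longrightarrow> xs ! (s - 1) \<noteq> v" and right: "e < length xs \<Longrightarrow> xs ! e \<noteq> v"
    using is_runD[OF r] unfolding v_def by blast+
  show ?thesis
  proof (intro set_eqI iffI)
    fix j assume "j \<in> {s..<e}"
    then have j: "s \<le> j" "j < e" by auto
    have "delp j xs = delp i xs"
    proof (subst delp_eq_sym_iff)
      show "j < length xs" "i < length xs" using j i se by auto
      show "\<forall>k. min j i \<le> k \<and> k \<le> max j i \<longrightarrow> xs ! k = xs ! min j i"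
      proof (intro allI impI)
        fix k assume k: "min j i \<le> k \<and> k \<le> max j i"
        have "xs ! k = v" using k j i by (intro const) (auto simp: min_def max_def split: if_splits)
        moreover have "xs ! min j i = v" using j i by (intro const) (auto simp: min_def)
        ultimately show "xs ! k = xs ! min j i" by simp
      qed
    qed
    then show "j \<in> cset xs i" using j se by (auto simp: cset_def)
  next
    fix j assume "j \<in> cset xs i"
    then have jl: "j < length xs" and eq: "delp j xs = delp i xs" by (auto simp: cset_def)
    have il: "i < length xs" using i se by simp
    have c: "\<And>k. min i j \<le> k \<Longrightarrow> k \<le> max i j \<Longrightarrow> xs ! k = xs ! min i j"
    proof -
      have c0: "\<forall>k. min j i \<le> k \<and> k \<le> max j i \<longrightarrow> xs ! k = xs ! min j i"
        using iffD1[OF delp_eq_sym_iff[OF jl il] eq] .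
      fix k assume "min i j \<le> k" "k \<le> max i j"
      then show "xs ! k = xs ! min i j" using c0 unfolding min.commute[of j i] max.commute[of j i] by blast
    qed
    show "j \<in> {s..<e}"
    proof (rule ccontr)
      assume "j \<notin> {s..<e}"
      then consider "j < s" | "e \<le> j" by (cases "j < s") auto
      then show False
      proof cases
        case 1
        then have m: "min i j = j" "max i j = i" using i by auto
        have "xs ! (s - 1) = xs ! j" using c[of "s - 1"] 1 i m by simp
        moreover have "xs ! s = xs ! j" using c[of s] 1 i m by simp
        moreover have "xs ! s = v" using const se by simp
        ultimately show False using left 1 by simp
      next
        case 2
        then have m: "min i j = i" "max i j = j" using i by auto
        have "xs ! e = xs ! i" using c[of e] 2 i m by simp
        moreover have "xs ! i = v" using const i by simp
        ultimately show False using right 2 jl by simp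
      qed
    qed
  qed
qed

lemma run_exists:
  assumes il: "i < length xs"
  shows "\<exists>s e. is_run xs s e \<and> s \<le> i \<and> i < e"
proof -
  define v where "v = xs ! i"
  define P where "P s \<longleftrightarrow> s \<le> i \<and> (\<forall>k. s \<le> k \<and> k \<le> i \<longrightarrow> xs ! k = v)" for s
  define s where "s = (LEAST s. P s)"
  have Pi: "P i" unfolding P_def v_def using le_antisym by blast
  have Ps: "P s" unfolding s_def using Pi by (rule LeastI)
  have smin: "\<And>t. P t \<Longrightarrow> s \<le> t" unfolding s_def by (rule Least_le)
  have si: "s \<le> i" and sc: "\<And>k. s \<le> k \<Longrightarrow> k \<le> i \<Longrightarrow> xs ! k = v" using Ps by (auto simp: P_def)
  define E where "E = {e. i < e \<and> e \<le> length xs \<and> (\<forall>k. i \<le> k \<and> k < e \<longrightarrow> xs ! k = v)}"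
  define e where "e = Max E"
  have fE: "finite E" by (rule finite_subset[of _ "{..length xs}"]) (auto simp: E_def)
  have "Suc i \<in> E" using il by (auto simp: E_def v_def less_Suc_eq)
  then have eE: "e \<in> E" and emax: "\<And>t. t \<in> E \<Longrightarrow> t \<le> e"
    using fE by (auto simp: e_def intro: Max_in)
  have ie: "i < e" and el: "e \<le> length xs" and ec: "\<And>k. i \<le> k \<Longrightarrow> k < e \<Longrightarrow> xs ! k = v"
    using eE by (auto simp: E_def)
  have xs_s: "xs ! s = v" using sc[of s] si by simp
  have "is_run xs s e"
  proof (rule is_runI)
    show "s < e" using si ie by simp
    show "e \<le> length xs" by (rule el)
    fix k assume "s \<le> k" "k < e"
    then have "xs ! k = v" using sc ec by (cases "k \<le> i") auto
    then show "xs ! k = xs ! s" using xs_s by simp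
  next
    assume s0: "0 < s"
    show "xs ! (s - 1) \<noteq> xs ! s"
    proof
      assume h: "xs ! (s - 1) = xs ! s"
      have "P (s - 1)" unfolding P_def
      proof (intro conjI allI impI)
        show "s - 1 \<le> i" using si by simp
        fix k assume k: "s - 1 \<le> k \<and> k \<le> i"
        show "xs ! k = v"
        proof (cases "k = s - 1")
          case True then show ?thesis using h xs_s by simp
        next
          case False then have "s \<le> k" using k s0 by linarith
          then show ?thesis using sc k by simp
        qed
      qed
      then show False using smin[of "s - 1"] s0 by simp
    qed
  next
    assume el2: "e < length xs"
    show "xs ! e \<noteq> xs ! s"
    proof
      assume h: "xs ! e = xs ! s"
      have "\<forall>k. i \<le> k \<and> k < Suc e \<longrightarrow> xs ! k = v"
      proof (intro allI impI)
        fix k assume k: "i \<le> k \<and> k < Suc e"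
        show "xs ! k = v"
        proof (cases "k = e")
          case True then show ?thesis using h xs_s by simp
        next
          case False then show ?thesis using ec k by simp
        qed
      qed
      then have "Suc e \<in> E" using ie el2 unfolding E_def by simp
      then show False using emax[of "Suc e"] by simp
    qed
  qed
  then show ?thesis using si ie by blast
qed

lemma run_unique:
  assumes "is_run xs s e" "s \<le> i" "i < e" "is_run xs s' e'" "s' \<le> i" "i < e'"
  shows "s = s' \<and> e = e'"
proof -
  have "{s..<e} = {s'..<e'}" using cset_run[OF assms(1-3)] cset_run[OF assms(4-6)] by simp
  moreover have "s < e" "s' < e'" using assms by auto
  ultimately show ?thesis using atLeastLessThan_inj by blast
qed

lemma sum_positions_runs:
  fixes g :: "nat \<Rightarrow> real"
  shows "(\<Sum>i<length xs. g (card (cset xs i))) = (\<Sum>p\<in>runs xs. real (snd p - fst p) * g (snd p - fst p))"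
proof -
  have 1: "g (card (cset xs i)) = (\<Sum>p\<in>runs xs. if fst p \<le> i \<and> i < snd p then g (snd p - fst p) else 0)"
    if il: "i < length xs" for i
  proof -
    obtain s e where se: "is_run xs s e" "s \<le> i" "i < e" using run_exists[OF il] by blast
    have "{p \<in> runs xs. fst p \<le> i \<and> i < snd p} = {(s, e)}"
    proof (intro set_eqI iffI)
      fix p assume "p \<in> {p \<in> runs xs. fst p \<le> i \<and> i < snd p}"
      then show "p \<in> {(s, e)}" using run_unique[OF se, of "fst p" "snd p"] by (cases p) (auto simp: runs_def)
    qed (use se in \<open>auto simp: runs_def\<close>)
    then have "(\<Sum>p\<in>runs xs. if fst p \<le> i \<and> i < snd p then g (snd p - fst p) else 0) = g (e - s)"
      by (simp add: sum.inter_filter[symmetric])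
    moreover have "card (cset xs i) = e - s" using cset_run[OF se] by simp
    ultimately show ?thesis by simp
  qed
  have 2: "(\<Sum>i<length xs. if fst p \<le> i \<and> i < snd p then g (snd p - fst p) else 0) = real (snd p - fst p) * g (snd p - fst p)"
    if "p \<in> runs xs" for p
  proof -
    have "{i \<in> {..<length xs}. fst p \<le> i \<and> i < snd p} = {fst p..<snd p}"
      using that is_runD(2)[of xs "fst p" "snd p"] by (auto simp: runs_def)
    then show ?thesis by (simp add: sum.inter_filter[symmetric])
  qed
  have "(\<Sum>i<length xs. g (card (cset xs i))) = (\<Sum>i<length xs. \<Sum>p\<in>runs xs. if fst p \<le> i \<and> i < snd p then g (snd p - fst p) else 0)"
    using 1 by (intro sum.cong) auto
  also have "\<dots> = (\<Sum>p\<in>runs xs. \<Sum>i<length xs. if fst p \<le> i \<and> i < snd p then g (snd p - fst p) else 0)"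
    by (rule sum.swap)
  also have "\<dots> = (\<Sum>p\<in>runs xs. real (snd p - fst p) * g (snd p - fst p))"
    using 2 by (intro sum.cong) auto
  finally show ?thesis .
qed

lemma sum_runs_num_runs:
  fixes h :: "nat \<Rightarrow> real"
  shows "(\<Sum>p\<in>runs xs. h (snd p - fst p)) = (\<Sum>r = 1..length xs. real (num_runs r xs) * h r)"
proof -
  have img: "(\<lambda>p. snd p - fst p) ` runs xs \<subseteq> {1..length xs}"
    using is_runD(1,2) by (fastforce simp: runs_def)
  have "(\<Sum>p\<in>runs xs. h (snd p - fst p)) = (\<Sum>r = 1..length xs. \<Sum>p\<in>{p. p \<in> runs xs \<and> snd p - fst p = r}. h (snd p - fst p))"
    using sum.group[OF finite_runs finite_atLeastAtMost img, of "\<lambda>p. h (snd p - fst p)"] by simp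
  also have "\<dots> = (\<Sum>r = 1..length xs. real (num_runs r xs) * h r)"
  proof (rule sum.cong[OF refl])
    fix r
    have "{p. p \<in> runs xs \<and> snd p - fst p = r} = {(i, j). is_run xs i j \<and> j - i = r}"
      by (auto simp: runs_def)
    moreover have "(\<Sum>p\<in>{p. p \<in> runs xs \<and> snd p - fst p = r}. h (snd p - fst p)) = (\<Sum>p\<in>{p. p \<in> runs xs \<and> snd p - fst p = r}. h r)"
      by (rule sum.cong) auto
    ultimately show "(\<Sum>p\<in>{p. p \<in> runs xs \<and> snd p - fst p = r}. h (snd p - fst p)) = real (num_runs r xs) * h r"
      by (simp add: num_runs_def)
  qed
  finally show ?thesis .
qed

lemma run_del:
  assumes r: "is_run x s e" and se: "Suc s < e"
  shows "is_run (delp s x) s (e - 1)"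
proof -
  define v where "v = x ! s"
  have c: "\<And>k. s \<le> k \<Longrightarrow> k < e \<Longrightarrow> x ! k = v" unfolding v_def by (rule is_runD(3)[OF r])
  have eL: "e \<le> length x" using is_runD(2)[OF r] .
  have left: "0 < s \<Longrightarrow> x ! (s - 1) \<noteq> v" unfolding v_def by (rule is_runD(4)[OF r])
  have right: "e < length x \<Longrightarrow> x ! e \<noteq> v" unfolding v_def by (rule is_runD(5)[OF r])
  have sL: "s < length x" using se eL by simp
  have ds: "delp s x ! s = v" using sL se eL c[of "Suc s"] by (simp add: nth_delp)
  show ?thesis
  proof (rule is_runI)
    show "s < e - 1" using se by simp
    show "e - 1 \<le> length (delp s x)" using eL sL by simp
    fix k assume k: "s \<le> k" "k < e - 1"
    have "delp s x ! k = v" using k sL eL c[of "Suc k"] by (simp add: nth_delp)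
    then show "delp s x ! k = delp s x ! s" using ds by simp
  next
    assume s0: "0 < s"
    have "delp s x ! (s - 1) = x ! (s - 1)" using s0 sL se eL by (simp add: nth_delp)
    then show "delp s x ! (s - 1) \<noteq> delp s x ! s" using ds left s0 by simp
  next
    assume el: "e - 1 < length (delp s x)"
    then have "e < length x" using sL se by simp
    moreover have "\<not> e - 1 < s" using se by simp
    moreover have "delp s x ! (e - 1) = (if e - 1 < s then x ! (e - 1) else x ! Suc (e - 1))"
      using el sL by (intro nth_delp) auto
    moreover have "Suc (e - 1) = e" using se by simp
    ultimately show "delp s x ! (e - 1) \<noteq> delp s x ! s" using ds right by simp
  qed
qed

lemma run_ins:
  assumes r: "is_run y s e"
  shows "is_run (insp s (y ! s) y) s (Suc e)"
proof -
  define v where "v = y ! s"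
  have c: "\<And>k. s \<le> k \<Longrightarrow> k < e \<Longrightarrow> y ! k = v" unfolding v_def by (rule is_runD(3)[OF r])
  have eL: "e \<le> length y" using is_runD(2)[OF r] .
  have se: "s < e" using is_runD(1)[OF r] .
  have left: "0 < s \<Longrightarrow> y ! (s - 1) \<noteq> v" unfolding v_def by (rule is_runD(4)[OF r])
  have right: "e < length y \<Longrightarrow> y ! e \<noteq> v" unfolding v_def by (rule is_runD(5)[OF r])
  have sL: "s \<le> length y" using se eL by simp
  have ds: "insp s v y ! s = v" using sL by (simp add: nth_insp)
  show ?thesis unfolding v_def[symmetric]
  proof (rule is_runI)
    show "s < Suc e" using se by simp
    show "Suc e \<le> length (insp s v y)" using eL sL by simp
    fix k assume k: "s \<le> k" "k < Suc e"
    have "insp s v y ! k = v"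
    proof (cases "k = s")
      case True then show ?thesis using ds by simp
    next
      case False
      then have "insp s v y ! k = y ! (k - 1)" using k sL eL by (simp add: nth_insp)
      also have "\<dots> = v" using False k by (intro c) auto
      finally show ?thesis .
    qed
    then show "insp s v y ! k = insp s v y ! s" using ds by simp
  next
    assume s0: "0 < s"
    have "insp s v y ! (s - 1) = y ! (s - 1)" using s0 sL by (simp add: nth_insp)
    then show "insp s v y ! (s - 1) \<noteq> insp s v y ! s" using ds left s0 by simp
  next
    assume el: "Suc e < length (insp s v y)"
    then have "e < length y" using sL by simp
    moreover have "insp s v y ! Suc e = y ! e" using el sL se by (simp add: nth_insp)
    ultimately show "insp s v y ! Suc e \<noteq> insp s v y ! s" using ds right by simp
  qed
qed

lemma delp_words: "x \<in> words q (Suc m) \<Longrightarrow> i < Suc m \<Longrightarrow> delp i x \<in> words q m"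
  using set_delp[of i x] by (auto simp: words_def)

lemma insp_words: "y \<in> words q m \<Longrightarrow> i \<le> m \<Longrightarrow> a < q \<Longrightarrow> insp i a y \<in> words q (Suc m)"
  using set_insp[of i a y] by (auto simp: words_def)

lemma runs_shift:
  fixes \<phi> :: "nat \<Rightarrow> real"
  assumes phi1: "\<phi> 1 = 0"
  shows "(\<Sum>x\<in>words q (Suc m). \<Sum>p\<in>runs x. \<phi> (snd p - fst p))
       = (\<Sum>y\<in>words q m. \<Sum>p\<in>runs y. \<phi> (snd p - fst p + 1))"
proof -
  define SA where "SA = Sigma (words q (Suc m)) runs"
  define A where "A = {z \<in> SA. Suc (fst (snd z)) < snd (snd z)}"
  define B where "B = Sigma (words q m) runs"
  have fSA: "finite SA" unfolding SA_def by (intro finite_SigmaI) auto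
  have "(\<Sum>x\<in>words q (Suc m). \<Sum>p\<in>runs x. \<phi> (snd p - fst p)) = (\<Sum>z\<in>SA. \<phi> (snd (snd z) - fst (snd z)))"
    unfolding SA_def by (subst sum.Sigma) (auto simp: case_prod_beta)
  also have "\<dots> = (\<Sum>z\<in>SA. if Suc (fst (snd z)) < snd (snd z) then \<phi> (snd (snd z) - fst (snd z)) else 0)"
  proof (rule sum.cong[OF refl])
    fix z assume "z \<in> SA"
    then have "is_run (fst z) (fst (snd z)) (snd (snd z))" by (auto simp: SA_def runs_def)
    then have "fst (snd z) < snd (snd z)" by (rule is_runD(1))
    show "\<phi> (snd (snd z) - fst (snd z)) = (if Suc (fst (snd z)) < snd (snd z) then \<phi> (snd (snd z) - fst (snd z)) else 0)"
    proof (cases "Suc (fst (snd z)) < snd (snd z)")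
      case False
      with \<open>fst (snd z) < snd (snd z)\<close> have "snd (snd z) - fst (snd z) = 1" by linarith
      then show ?thesis using phi1 False by simp
    qed simp
  qed
  also have "\<dots> = (\<Sum>z\<in>A. \<phi> (snd (snd z) - fst (snd z)))"
    unfolding A_def using fSA by (simp add: sum.inter_filter)
  also have "\<dots> = (\<Sum>z\<in>B. \<phi> (snd (snd z) - fst (snd z) + 1))"
  proof -
    define I where "I = (\<lambda>(x, s, e :: nat). (delp s x, s, e - 1))"
    define J where "J = (\<lambda>(y, s, e). (insp s (y ! s) y, s, Suc e))"
    have hB: "I (J b) = b \<and> J b \<in> A \<and> \<phi> (snd (snd (J b)) - fst (snd (J b))) = \<phi> (snd (snd b) - fst (snd b) + 1)"
      if "b \<in> B" for b
    proof -
      obtain y s e where b: "b = (y, s, e)" "y \<in> words q m" "is_run y s e"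
        using \<open>b \<in> B\<close> by (auto simp: B_def runs_def)
      have se: "s < e" "e \<le> length y" using is_runD(1,2)[OF b(3)] by auto
      have ly: "length y = m" using b(2) by (simp add: words_def)
      have "y ! s \<in> set y" using se by simp
      then have "y ! s < q" using b(2) by (auto simp: words_def)
      then have "insp s (y ! s) y \<in> words q (Suc m)" using insp_words[OF b(2)] se ly by simp
      then show ?thesis
        using b run_ins[OF b(3)] se by (auto simp: A_def SA_def runs_def I_def J_def Suc_diff_le)
    qed
    have hA: "J (I a) = a \<and> I a \<in> B" if "a \<in> A" for a
    proof -
      obtain x s e where a: "a = (x, s, e)" "x \<in> words q (Suc m)" "is_run x s e" "Suc s < e"
        using \<open>a \<in> A\<close> by (auto simp: A_def SA_def runs_def)
      have se: "s < e" "e \<le> length x" using is_runD(1,2)[OF a(3)] by auto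
      have lx: "length x = Suc m" using a(2) by (simp add: words_def)
      have xs: "delp s x ! s = x ! s"
      proof -
        have "delp s x ! s = x ! Suc s" using se a(4) by (simp add: nth_delp)
        also have "\<dots> = x ! s" using is_runD(3)[OF a(3), of "Suc s"] a(4) by simp
        finally show ?thesis .
      qed
      have "s < Suc m" using se lx by simp
      then show ?thesis
        using a se xs insp_delp[of s x] delp_words[OF a(2)] run_del[OF a(3) a(4)]
        by (auto simp: B_def runs_def I_def J_def)
    qed
    show ?thesis
      by (rule sum.reindex_bij_witness[symmetric, where i = I and j = J]) (use hA hB in auto)
  qed
  also have "\<dots> = (\<Sum>y\<in>words q m. \<Sum>p\<in>runs y. \<phi> (snd p - fst p + 1))"
    unfolding B_def by (subst sum.Sigma) (auto simp: case_prod_beta)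
  finally show ?thesis .
qed

lemma card_ind: fixes N :: nat shows "real (card {i. i < N \<and> P i}) * c = (\<Sum>i<N. if P i then c else (0::real))"
proof -
  have e: "{i. i < N \<and> P i} = {i \<in> {..<N}. P i}" by auto
  have "real (card {i. i < N \<and> P i}) * c = (\<Sum>i\<in>{i \<in> {..<N}. P i}. c)" unfolding e by simp
  also have "\<dots> = (\<Sum>i<N. if P i then c else (0::real))" using sum.inter_filter[OF finite_lessThan, where g = "\<lambda>_. c" and P = P] by simp
  finally show ?thesis .
qed

lemma omega_words_del:
  assumes "x \<in> words q (Suc m)" "y \<in> words q m"
  shows "omega y x = card {i. i < Suc m \<and> delp i x = y}"
  using assms by (intro omega_del) (auto simp: words_def)

lemma card_preimage:
  assumes y: "y \<in> words q m" and i: "i < Suc m"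
  shows "card {x \<in> words q (Suc m). delp i x = y} = q"
proof -
  have ly: "length y = m" using y by (simp add: words_def)
  have "{x \<in> words q (Suc m). delp i x = y} = (\<lambda>a. insp i a y) ` {..<q}"
  proof (intro set_eqI iffI)
    fix x assume "x \<in> {x \<in> words q (Suc m). delp i x = y}"
    then have x: "x \<in> words q (Suc m)" "delp i x = y" by auto
    have lx: "length x = Suc m" using x by (simp add: words_def)
    have "x ! i \<in> set x" using lx i by simp
    then have "x ! i < q" using x by (auto simp: words_def)
    moreover have "x = insp i (x ! i) y" using insp_delp[of i x] lx i x(2) by simp
    ultimately show "x \<in> (\<lambda>a. insp i a y) ` {..<q}" by blast
  next
    fix x assume "x \<in> (\<lambda>a. insp i a y) ` {..<q}"
    then obtain a where a: "a < q" "x = insp i a y" by auto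
    then show "x \<in> {x \<in> words q (Suc m). delp i x = y}"
      using insp_words[OF y, of i a] i ly by simp
  qed
  moreover have "inj_on (\<lambda>a. insp i a y) {..<q}"
  proof (rule inj_onI)
    fix a b assume "insp i a y = insp i b y"
    then have "insp i a y ! i = insp i b y ! i" by simp
    then show "a = b" using i ly by (simp add: nth_insp)
  qed
  ultimately show ?thesis by (simp add: card_image)
qed

lemma del_T:
  assumes y: "y \<in> words q m"
  shows "(\<Sum>x\<in>words q (Suc m). real (omega y x)) = real (Suc m) * real q"
proof -
  have "(\<Sum>x\<in>words q (Suc m). real (omega y x)) = (\<Sum>x\<in>words q (Suc m). \<Sum>i<Suc m. if delp i x = y then 1 else (0::real))"
  proof (rule sum.cong[OF refl])
    fix x assume x: "x \<in> words q (Suc m)"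
    show "real (omega y x) = (\<Sum>i<Suc m. if delp i x = y then 1 else (0::real))"
      using card_ind[where c = 1 and N = "Suc m" and P = "\<lambda>i. delp i x = y"] omega_words_del[OF x y] by simp
  qed
  also have "\<dots> = (\<Sum>i<Suc m. \<Sum>x\<in>words q (Suc m). if delp i x = y then 1 else (0::real))"
    by (rule sum.swap)
  also have "\<dots> = (\<Sum>i<Suc m. real q)"
  proof (rule sum.cong[OF refl])
    fix i assume "i \<in> {..<Suc m}"
    then have "card {x \<in> words q (Suc m). delp i x = y} = q" using card_preimage[OF y] by simp
    then show "(\<Sum>x\<in>words q (Suc m). if delp i x = y then 1 else (0::real)) = real q"
      using sum.inter_filter[of "words q (Suc m)" "\<lambda>_. (1::real)" "\<lambda>x. delp i x = y"] by simp
  qed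
  finally show ?thesis by simp
qed

lemma del_swap:
  fixes h :: "nat list \<Rightarrow> nat list \<Rightarrow> real"
  shows "(\<Sum>y\<in>words q m. \<Sum>x\<in>words q (Suc m). real (omega y x) * h x y)
       = (\<Sum>x\<in>words q (Suc m). \<Sum>i<Suc m. h x (delp i x))"
proof -
  have "(\<Sum>y\<in>words q m. \<Sum>x\<in>words q (Suc m). real (omega y x) * h x y)
      = (\<Sum>y\<in>words q m. \<Sum>x\<in>words q (Suc m). \<Sum>i<Suc m. if delp i x = y then h x y else 0)"
  proof (intro sum.cong refl)
    fix y x assume y: "y \<in> words q m" and x: "x \<in> words q (Suc m)"
    show "real (omega y x) * h x y = (\<Sum>i<Suc m. if delp i x = y then h x y else 0)"
      by (subst omega_words_del[OF x y], rule card_ind)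
  qed
  also have "\<dots> = (\<Sum>x\<in>words q (Suc m). \<Sum>y\<in>words q m. \<Sum>i<Suc m. if delp i x = y then h x y else 0)"
    by (rule sum.swap)
  also have "\<dots> = (\<Sum>x\<in>words q (Suc m). \<Sum>i<Suc m. \<Sum>y\<in>words q m. if delp i x = y then h x y else 0)"
    by (intro sum.cong refl sum.swap)
  also have "\<dots> = (\<Sum>x\<in>words q (Suc m). \<Sum>i<Suc m. h x (delp i x))"
    using delp_words by (intro sum.cong refl) auto
  finally show ?thesis .
qed

lemma ins_swap:
  fixes h :: "nat list \<Rightarrow> real"
  assumes y: "y \<in> words q (Suc n)"
  shows "(\<Sum>x\<in>words q n. real (omega x y) * h x) = (\<Sum>i<Suc n. h (delp i y))"
proof -
  have "(\<Sum>x\<in>words q n. real (omega x y) * h x)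
      = (\<Sum>x\<in>words q n. \<Sum>i<Suc n. if delp i y = x then h x else 0)"
  proof (intro sum.cong refl)
    fix x assume x: "x \<in> words q n"
    show "real (omega x y) * h x = (\<Sum>i<Suc n. if delp i y = x then h x else 0)"
      by (subst omega_words_del[OF y x], rule card_ind)
  qed
  also have "\<dots> = (\<Sum>i<Suc n. \<Sum>x\<in>words q n. if delp i y = x then h x else 0)"
    by (rule sum.swap)
  also have "\<dots> = (\<Sum>i<Suc n. h (delp i y))"
    using delp_words[OF y] by (intro sum.cong refl) auto
  finally show ?thesis .
qed

lemma omega_cset:
  assumes "x \<in> words q (Suc m)" "i < Suc m"
  shows "omega (delp i x) x = card (cset x i)"
proof -
  have lx: "length x = Suc m" using assms by (simp add: words_def)
  have "omega (delp i x) x = card {j. j < Suc m \<and> delp j x = delp i x}"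
    using assms lx by (intro omega_del) auto
  also have "{j. j < Suc m \<and> delp j x = delp i x} = cset x i" by (auto simp: cset_def lx)
  finally show ?thesis .
qed

lemma entropy_formula:
  fixes w :: "nat list \<Rightarrow> nat" and D T :: real
  assumes ch: "\<And>x. x \<in> words q n \<Longrightarrow> ch x y = real (w x) / D" and D: "D > 0"
    and T: "(\<Sum>x\<in>words q n. real (w x)) = T" and Tp: "T > 0"
  shows "input_entropy ch q n y = log 2 T - (\<Sum>x\<in>words q n. real (w x) * log 2 (real (w x))) / T"
proof -
  have S: "(\<Sum>x'\<in>words q n. ch x' y) = T / D"
    using ch T by (simp add: sum_divide_distrib[symmetric])
  have post: "ch x y / (\<Sum>x'\<in>words q n. ch x' y) = real (w x) / T" if "x \<in> words q n" for x
    unfolding S ch[OF that] using D Tp by (simp add: field_simps)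
  have tm: "(if real (w x) / T = 0 then 0 else real (w x) / T * log 2 (real (w x) / T))
      = real (w x) * log 2 (real (w x)) / T - real (w x) * log 2 T / T" for x
  proof (cases "w x = 0")
    case True then show ?thesis by simp
  next
    case False
    have l: "log 2 (real (w x) / T) = log 2 (real (w x)) - log 2 T" using Tp False by (simp add: log_divide)
    have nz: "real (w x) / T \<noteq> 0" using Tp False by simp
    show ?thesis unfolding l using nz by (simp add: right_diff_distrib diff_divide_distrib)
  qed
  have "input_entropy ch q n y = - (\<Sum>x\<in>words q n. if ch x y / (\<Sum>x'\<in>words q n. ch x' y) = 0 then 0
      else ch x y / (\<Sum>x'\<in>words q n. ch x' y) * log 2 (ch x y / (\<Sum>x'\<in>words q n. ch x' y)))"
    unfolding input_entropy_def Let_def ..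
  also have "\<dots> = - (\<Sum>x\<in>words q n. real (w x) * log 2 (real (w x)) / T - real (w x) * log 2 T / T)"
  proof (intro arg_cong[where f = uminus] sum.cong refl)
    fix x assume x: "x \<in> words q n"
    show "(if ch x y / (\<Sum>x'\<in>words q n. ch x' y) = 0 then 0
      else ch x y / (\<Sum>x'\<in>words q n. ch x' y) * log 2 (ch x y / (\<Sum>x'\<in>words q n. ch x' y)))
      = real (w x) * log 2 (real (w x)) / T - real (w x) * log 2 T / T"
      unfolding post[OF x] by (rule tm)
  qed
  also have "\<dots> = - ((\<Sum>x\<in>words q n. real (w x) * log 2 (real (w x))) / T - log 2 T * (\<Sum>x\<in>words q n. real (w x)) / T)"
    by (simp add: sum_subtractf sum_divide_distrib[symmetric] sum_distrib_left mult.commute)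
  also have "\<dots> = log 2 T - (\<Sum>x\<in>words q n. real (w x) * log 2 (real (w x))) / T"
    using T Tp by (simp add: field_simps)
  finally show ?thesis .
qed

lemma arith_aux:
  fixes A T L K :: real
  assumes "A > 0" "T > 0"
  shows "(A * L - K / T) / A = L - K / (T * A)"
  using assms by (simp add: field_simps)

lemma del_part:
  fixes m q :: nat
  assumes q: "q \<ge> 2"
  shows "(\<Sum>y\<in>words q m. H_in_del q (Suc m) y) / real q ^ m
       = log 2 (real (Suc m) * real q)
         - (\<Sum>r = 1..m. real (N_runs m r q) * (real r + 1) * log 2 (real r + 1)) / (real (Suc m) * real q ^ Suc m)"
proof -
  define T where "T = real (Suc m) * real q"
  have Tp: "T > 0" using q by (simp add: T_def)
  define K where "K = (\<Sum>y\<in>words q m. \<Sum>x\<in>words q (Suc m). real (omega y x) * log 2 (real (omega y x)))"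
  have H: "H_in_del q (Suc m) y = log 2 T - (\<Sum>x\<in>words q (Suc m). real (omega y x) * log 2 (real (omega y x))) / T"
    if y: "y \<in> words q m" for y
    unfolding H_in_del_def
    by (rule entropy_formula[where w = "\<lambda>x. omega y x" and D = "real (Suc m)"])
       (use q in \<open>auto simp: del_prob_def del_T[OF y] T_def\<close>)
  have sumH: "(\<Sum>y\<in>words q m. H_in_del q (Suc m) y) = real q ^ m * log 2 T - K / T"
    using H by (simp add: sum_subtractf sum_divide_distrib[symmetric] card_words K_def)
  define \<phi> :: "nat \<Rightarrow> real" where "\<phi> k = real k * log 2 (real k)" for k
  have K: "K = (\<Sum>r = 1..m. real (N_runs m r q) * (real r + 1) * log 2 (real r + 1))"
  proof -
    have "K = (\<Sum>x\<in>words q (Suc m). \<Sum>i<Suc m. log 2 (real (omega (delp i x) x)))"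
      unfolding K_def by (rule del_swap)
    also have "\<dots> = (\<Sum>x\<in>words q (Suc m). \<Sum>i<length x. log 2 (real (card (cset x i))))"
      by (intro sum.cong refl) (auto simp: omega_cset words_def)
    also have "\<dots> = (\<Sum>x\<in>words q (Suc m). \<Sum>p\<in>runs x. \<phi> (snd p - fst p))"
      unfolding \<phi>_def by (intro sum.cong refl sum_positions_runs)
    also have "\<dots> = (\<Sum>y\<in>words q m. \<Sum>p\<in>runs y. \<phi> (snd p - fst p + 1))"
      by (rule runs_shift) (simp add: \<phi>_def)
    also have "\<dots> = (\<Sum>y\<in>words q m. \<Sum>r = 1..m. real (num_runs r y) * \<phi> (r + 1))"
    proof (intro sum.cong refl)
      fix y assume "y \<in> words q m"
      then have "length y = m" by (simp add: words_def)
      then show "(\<Sum>p\<in>runs y. \<phi> (snd p - fst p + 1)) = (\<Sum>r = 1..m. real (num_runs r y) * \<phi> (r + 1))"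
        using sum_runs_num_runs[of "\<lambda>r. \<phi> (r + 1)" y] by simp
    qed
    also have "\<dots> = (\<Sum>r = 1..m. \<Sum>y\<in>words q m. real (num_runs r y) * \<phi> (r + 1))"
      by (rule sum.swap)
    also have "\<dots> = (\<Sum>r = 1..m. real (N_runs m r q) * \<phi> (r + 1))"
      by (simp add: N_runs_def sum_distrib_right)
    finally show ?thesis by (simp add: \<phi>_def mult.assoc add.commute)
  qed
  have qm: "real q ^ m > 0" using q by simp
  show ?thesis unfolding sumH K[symmetric] arith_aux[OF qm Tp]
    by (simp add: T_def mult.assoc)
qed

lemma ins_part:
  fixes n q :: nat
  assumes q: "q \<ge> 2"
  shows "(\<Sum>y\<in>words q (Suc n). H_in_ins q n y) / real q ^ Suc n
       = log 2 (real (Suc n))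
         - (\<Sum>r = 1..Suc n. real (N_runs (Suc n) r q) * real r * log 2 (real r)) / (real (Suc n) * real q ^ Suc n)"
proof -
  define T where "T = real (Suc n)"
  have Tp: "T > 0" by (simp add: T_def)
  define K where "K = (\<Sum>y\<in>words q (Suc n). \<Sum>x\<in>words q n. real (omega x y) * log 2 (real (omega x y)))"
  have TT: "(\<Sum>x\<in>words q n. real (omega x y)) = T" if y: "y \<in> words q (Suc n)" for y
    using ins_swap[OF y, of "\<lambda>_. 1"] by (simp add: T_def)
  have H: "H_in_ins q n y = log 2 T - (\<Sum>x\<in>words q n. real (omega x y) * log 2 (real (omega x y))) / T"
    if y: "y \<in> words q (Suc n)" for y
    unfolding H_in_ins_def
    by (rule entropy_formula[where w = "\<lambda>x. omega x y" and D = "real (n + 1) * real q"])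
       (use q TT[OF y] Tp in \<open>auto simp: ins_prob_def\<close>)
  have sumH: "(\<Sum>y\<in>words q (Suc n). H_in_ins q n y) = real q ^ Suc n * log 2 T - K / T"
    using H by (simp add: sum_subtractf sum_divide_distrib[symmetric] card_words K_def del: power_Suc)
  have K: "K = (\<Sum>r = 1..Suc n. real (N_runs (Suc n) r q) * real r * log 2 (real r))"
  proof -
    have "K = (\<Sum>y\<in>words q (Suc n). \<Sum>i<Suc n. log 2 (real (omega (delp i y) y)))"
      unfolding K_def by (intro sum.cong refl ins_swap)
    also have "\<dots> = (\<Sum>y\<in>words q (Suc n). \<Sum>i<length y. log 2 (real (card (cset y i))))"
      by (intro sum.cong refl) (auto simp: omega_cset words_def)
    also have "\<dots> = (\<Sum>y\<in>words q (Suc n). \<Sum>p\<in>runs y. real (snd p - fst p) * log 2 (real (snd p - fst p)))"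
      by (intro sum.cong refl sum_positions_runs)
    also have "\<dots> = (\<Sum>y\<in>words q (Suc n). \<Sum>r = 1..Suc n. real (num_runs r y) * (real r * log 2 (real r)))"
    proof (intro sum.cong refl)
      fix y assume "y \<in> words q (Suc n)"
      then have "length y = Suc n" by (simp add: words_def)
      then show "(\<Sum>p\<in>runs y. real (snd p - fst p) * log 2 (real (snd p - fst p))) = (\<Sum>r = 1..Suc n. real (num_runs r y) * (real r * log 2 (real r)))"
        using sum_runs_num_runs[of "\<lambda>r. real r * log 2 (real r)" y] by simp
    qed
    also have "\<dots> = (\<Sum>r = 1..Suc n. \<Sum>y\<in>words q (Suc n). real (num_runs r y) * (real r * log 2 (real r)))"
      by (rule sum.swap)
    also have "\<dots> = (\<Sum>r = 1..Suc n. real (N_runs (Suc n) r q) * (real r * log 2 (real r)))"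
      by (simp add: N_runs_def sum_distrib_right)
    finally show ?thesis by (simp add: mult.assoc)
  qed
  have qm: "real q ^ Suc n > 0" using q by simp
  show ?thesis unfolding sumH K[symmetric] arith_aux[OF qm Tp]
    by (simp add: T_def del: power_Suc)
qed

theorem lemma12:
  fixes n q :: nat
  assumes "n \<ge> 1" and "q \<ge> 2"
  shows "((\<Sum>y\<in>words q (n - 1). H_in_del q n y) / real q ^ (n - 1)
           = log 2 (real n * real q)
             - (\<Sum>r = 1..n - 1. real (N_runs (n - 1) r q) * (real r + 1) * log 2 (real r + 1))
               / (real n * real q ^ n))
    \<and> ((\<Sum>y\<in>words q (n + 1). H_in_ins q n y) / real q ^ (n + 1)
           = log 2 (real n + 1)
             - (\<Sum>r = 1..n + 1. real (N_runs (n + 1) r q) * real r * log 2 (real r))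
               / ((real n + 1) * real q ^ (n + 1)))"
proof
  obtain m where n: "n = Suc m" using assms(1) by (cases n) auto
  show "(\<Sum>y\<in>words q (n - 1). H_in_del q n y) / real q ^ (n - 1)
           = log 2 (real n * real q)
             - (\<Sum>r = 1..n - 1. real (N_runs (n - 1) r q) * (real r + 1) * log 2 (real r + 1))
               / (real n * real q ^ n)"
    unfolding n using del_part[OF assms(2), of m] by simp
next
  show "(\<Sum>y\<in>words q (n + 1). H_in_ins q n y) / real q ^ (n + 1)
           = log 2 (real n + 1)
             - (\<Sum>r = 1..n + 1. real (N_runs (n + 1) r q) * real r * log 2 (real r))
               / ((real n + 1) * real q ^ (n + 1))"
    using ins_part[OF assms(2), of n] by (simp add: add.commute)
qed


end
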